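(* Let $M$ be a complete pointed metric space and $Y$ a real Banach space. If $f \in \mathrm{Lip}_0(M,Y)$ attains its norm toward some vector (i.e. $f \in \mathrm{A}(M,Y)$), then the associated operator $T_f \in \mathcal{L}(\mathcal{F}(M),Y)$ quasi attains its norm (i.e. $T_f \in \mathrm{QNA}(\mathcal{F}(M),Y)$).
   Context: Throughout, metric spaces are complete and pointed, with base point $0$; $Y$ is a real Banach space. $\mathrm{Lip}_0(M,Y)$ is the Banach space of Lipschitz maps $f:M\to Y$ with $f(0)=0$, normed by $\|f\| = \sup_{p\neq q} \|f(p)-f(q)\|/d(p,q)$. A map $f\in \mathrm{Lip}_0(M,Y)$ attains its norm toward $y\in Y$ if there is a sequence $(p_n,q_n)$ in $M\times M$ with $p_n\neq q_n$ such that $[f(p_n)-f(q_n)]/d(p_n,q_n)\to y$ and $\|y\|=\|f\|$; $\mathrm{A}(M,Y)$ is the set of $f$ that attain their norm toward some $y\in Y$. The Lipschitz-free space $\mathcal{F}(M)$ is the closed linear span of the evaluations $\delta(x)$ ($\delta(x)(g)=g(x)$) in $\mathrm{Lip}_0(M,\mathbb{R})^*$; each $f\in\mathrm{Lip}_0(M,Y)$ corresponds to the unique $T_f\in\mathcal{L}(\mathcal{F}(M),Y)$ with $T_f(\delta(x))=f(x)$, and $\|T_f\|=\|f\|$. For Banach spaces $X,Y$, an operator $T\in\mathcal{L}(X,Y)$ quasi attains its norm, written $T\in\mathrm{QNA}(X,Y)$, if there exist a sequence $(x_n)\subset B_X$ and $y_0\in Y$ with $Tx_n\to y_0$ and $\|y_0\|=\|T\|$.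 *)

theory Defs
  imports "HOL-Analysis.Analysis"
begin

definition lip0 :: "'a::metric_space \<Rightarrow> ('a \<Rightarrow> 'b::real_normed_vector) set" where
  "lip0 z = {f. f z = 0 \<and> (\<exists>L. \<forall>p q. norm (f p - f q) \<le> L * dist p q)}"

definition lipnorm :: "('a::metric_space \<Rightarrow> 'b::real_normed_vector) \<Rightarrow> real" where
  "lipnorm f = Sup {norm (f p - f q) / dist p q | p q. p \<noteq> q}"

definition attains_toward :: "'a::metric_space \<Rightarrow> ('a \<Rightarrow> 'b::real_normed_vector) \<Rightarrow> 'b \<Rightarrow> bool" where
  "attains_toward z f y \<longleftrightarrow> f \<in> lip0 z \<and>
     (\<exists>p q. (\<forall>n. p n \<noteq> q n) \<and>
        ((\<lambda>n. (1 / dist (p n) (q n)) *\<^sub>R (f (p n) - f (q n))) \<longlonglongrightarrow> y) \<and>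
        norm y = lipnorm f)"

definition attainsA :: "'a::metric_space \<Rightarrow> ('a \<Rightarrow> 'b::real_normed_vector) set" where
  "attainsA z = {f. \<exists>y. attains_toward z f y}"

text \<open>Elements of Lip_0(M,R)^* are represented extensionally as functions on 'a \<Rightarrow> real
  vanishing outside Lip_0(M,R).  Dual norm:\<close>
definition dnorm :: "'a::metric_space \<Rightarrow> (('a \<Rightarrow> real) \<Rightarrow> real) \<Rightarrow> real" where
  "dnorm z \<phi> = Sup {\<bar>\<phi> g\<bar> | g. g \<in> lip0 z \<and> lipnorm g \<le> 1}"

definition lipdual :: "'a::metric_space \<Rightarrow> (('a \<Rightarrow> real) \<Rightarrow> real) set" where
  "lipdual z = {\<phi>. (\<forall>g. g \<notin> lip0 z \<longrightarrow> \<phi> g = 0) \<and>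
     (\<forall>g h a b. g \<in> lip0 z \<longrightarrow> h \<in> lip0 z \<longrightarrow>
        \<phi> (\<lambda>x. a * g x + b * h x) = a * \<phi> g + b * \<phi> h) \<and>
     (\<exists>C. \<forall>g \<in> lip0 z. \<bar>\<phi> g\<bar> \<le> C * lipnorm g)}"

definition delta :: "'a::metric_space \<Rightarrow> 'a \<Rightarrow> ('a \<Rightarrow> real) \<Rightarrow> real" where
  "delta z x = (\<lambda>g. if g \<in> lip0 z then g x else 0)"

text \<open>Lipschitz-free space: closed linear span of the evaluations in the dual.\<close>
definition free :: "'a::metric_space \<Rightarrow> (('a \<Rightarrow> real) \<Rightarrow> real) set" where
  "free z = {\<phi> \<in> lipdual z. \<forall>e>0. \<exists>(n::nat) (c::nat \<Rightarrow> real) (x::nat \<Rightarrow> 'a).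
      dnorm z (\<lambda>g. \<phi> g - (\<Sum>i<n. c i * delta z (x i) g)) < e}"

text \<open>T is the operator T_f : F(M) \<rightarrow> Y associated to f (bounded linear, T(delta x) = f x);
  such T is unique.\<close>
definition assoc_op :: "'a::metric_space \<Rightarrow> ('a \<Rightarrow> 'b::real_normed_vector)
    \<Rightarrow> ((('a \<Rightarrow> real) \<Rightarrow> real) \<Rightarrow> 'b) \<Rightarrow> bool" where
  "assoc_op z f T \<longleftrightarrow>
     (\<forall>\<phi> \<in> free z. \<forall>\<psi> \<in> free z. \<forall>a b.
        T (\<lambda>g. a * \<phi> g + b * \<psi> g) = a *\<^sub>R T \<phi> + b *\<^sub>R T \<psi>) \<and>
     (\<exists>C. \<forall>\<phi> \<in> free z. norm (T \<phi>) \<le> C * dnorm z \<phi>) \<and>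
     (\<forall>x. T (delta z x) = f x)"

definition opnorm_free :: "'a::metric_space \<Rightarrow> ((('a \<Rightarrow> real) \<Rightarrow> real) \<Rightarrow> 'b::real_normed_vector) \<Rightarrow> real" where
  "opnorm_free z T = Sup {norm (T \<phi>) | \<phi>. \<phi> \<in> free z \<and> dnorm z \<phi> \<le> 1}"

definition qna_free :: "'a::metric_space \<Rightarrow> ((('a \<Rightarrow> real) \<Rightarrow> real) \<Rightarrow> 'b::real_normed_vector) \<Rightarrow> bool" where
  "qna_free z T \<longleftrightarrow> (\<exists>\<mu> y0. (\<forall>n. \<mu> n \<in> free z \<and> dnorm z (\<mu> n) \<le> 1) \<and>
      ((\<lambda>n. T (\<mu> n)) \<longlonglongrightarrow> y0) \<and> norm y0 = opnorm_free z T)"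

end

theory Submission
  imports Defs
begin


definition lin_on :: "'b::real_normed_vector set \<Rightarrow> ('b \<Rightarrow> real) \<Rightarrow> bool" where
  "lin_on V \<phi> \<longleftrightarrow> (\<forall>u\<in>V. \<forall>w\<in>V. \<phi> (u + w) = \<phi> u + \<phi> w) \<and> (\<forall>a. \<forall>u\<in>V. \<phi> (a *\<^sub>R u) = a * \<phi> u)"

lemma hb_step:
  fixes S :: "'b::real_normed_vector set"
  assumes lin: "lin_on (span S) \<phi>" and bd: "\<forall>u\<in>span S. \<phi> u \<le> norm u"
  shows "\<exists>\<phi>'. lin_on (span (insert x S)) \<phi>' \<and> (\<forall>u\<in>span (insert x S). \<phi>' u \<le> norm u)
     \<and> (\<forall>u\<in>span S. \<phi>' u = \<phi> u)
     \<and> (x \<notin> span S \<longrightarrow> \<phi>' x = Inf {norm (w + x) - \<phi> w | w. w \<in> span S})"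
proof (cases "x \<in> span S")
  case True
  then show ?thesis using assms span_redundant[OF True] by auto
next
  case False
  have ladd: "\<phi> (u + w) = \<phi> u + \<phi> w" if "u \<in> span S" "w \<in> span S" for u w
    using lin that unfolding lin_on_def by blast
  have lsc: "\<phi> (a *\<^sub>R u) = a * \<phi> u" if "u \<in> span S" for a u
    using lin that unfolding lin_on_def by blast
  have l0: "\<phi> 0 = 0" using lsc[of 0 0] by (simp add: span_zero)
  define A where "A = {norm (w + x) - \<phi> w | w. w \<in> span S}"
  define c where "c = Inf A"
  have Ane: "A \<noteq> {}" unfolding A_def using span_zero by blast
  have Abdd: "bdd_below A"
  proof -
    have "- norm x \<le> a" if "a \<in> A" for a
    proof -
      obtain w where w: "w \<in> span S" "a = norm (w + x) - \<phi> w" using \<open>a \<in> A\<close> unfolding A_def by blast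
      have "\<phi> w \<le> norm w" using bd w by blast
      also have "norm w \<le> norm (w + x) + norm x" using norm_triangle_ineq4[of "w + x" x] by simp
      finally show ?thesis using w by linarith
    qed
    then show ?thesis by (meson bdd_below.I)
  qed
  have clow: "c \<le> norm (w + x) - \<phi> w" if "w \<in> span S" for w
    unfolding c_def using Abdd that by (intro cInf_lower) (auto simp: A_def)
  have cup: "\<phi> u - norm (u - x) \<le> c" if u: "u \<in> span S" for u
    unfolding c_def
  proof (rule cInf_greatest[OF Ane])
    fix a assume "a \<in> A"
    then obtain w where w: "w \<in> span S" "a = norm (w + x) - \<phi> w" unfolding A_def by blast
    have "\<phi> u + \<phi> w = \<phi> (u + w)" using ladd u w by simp
    also have "\<dots> \<le> norm (u + w)" using bd u w span_add by blast
    also have "\<dots> = norm ((u - x) + (w + x))" by simp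
    also have "\<dots> \<le> norm (u - x) + norm (w + x)" by (rule norm_triangle_ineq)
    finally show "\<phi> u - norm (u - x) \<le> a" using w by linarith
  qed
  have uniq: "s = t" if "y - s *\<^sub>R x \<in> span S" "y - t *\<^sub>R x \<in> span S" for y s t
  proof (rule ccontr)
    assume "s \<noteq> t"
    have "(y - s *\<^sub>R x) - (y - t *\<^sub>R x) \<in> span S" using that span_diff by blast
    then have "(t - s) *\<^sub>R x \<in> span S" by (simp add: algebra_simps)
    then have "(1 / (t - s)) *\<^sub>R ((t - s) *\<^sub>R x) \<in> span S" using span_scale by blast
    then have "x \<in> span S" using \<open>s \<noteq> t\<close> by simp
    then show False using False by blast
  qed
  define tc where "tc y = (THE t. y - t *\<^sub>R x \<in> span S)" for y
  have tc: "y - tc y *\<^sub>R x \<in> span S" if yin: "y \<in> span (insert x S)" for y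
  proof -
    obtain k where "y - k *\<^sub>R x \<in> span S" using yin span_breakdown_eq by blast
    then show ?thesis unfolding tc_def by (rule theI) (use uniq \<open>y - k *\<^sub>R x \<in> span S\<close> in blast)
  qed
  have tceq: "tc y = t" if "y - t *\<^sub>R x \<in> span S" for y t
    unfolding tc_def using that uniq by blast
  define \<phi>' where "\<phi>' y = \<phi> (y - tc y *\<^sub>R x) + tc y * c" for y
  show ?thesis
  proof (unfold lin_on_def, intro exI conjI ballI allI impI)
    fix u w assume u: "u \<in> span (insert x S)" and w: "w \<in> span (insert x S)"
    have e: "(u + w) - (tc u + tc w) *\<^sub>R x = (u - tc u *\<^sub>R x) + (w - tc w *\<^sub>R x)"
      by (simp add: algebra_simps)
    have "tc (u + w) = tc u + tc w" by (rule tceq, subst e, rule span_add[OF tc[OF u] tc[OF w]])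
    then show "\<phi>' (u + w) = \<phi>' u + \<phi>' w" unfolding \<phi>'_def using e ladd[OF tc[OF u] tc[OF w]]
      by (simp add: algebra_simps)
  next
    fix a u assume u: "u \<in> span (insert x S)"
    have e: "a *\<^sub>R u - (a * tc u) *\<^sub>R x = a *\<^sub>R (u - tc u *\<^sub>R x)" by (simp add: algebra_simps)
    have "tc (a *\<^sub>R u) = a * tc u" by (rule tceq, subst e, rule span_scale[OF tc[OF u]])
    then show "\<phi>' (a *\<^sub>R u) = a * \<phi>' u" unfolding \<phi>'_def using e lsc[OF tc[OF u]]
      by (simp add: algebra_simps)
  next
    fix u assume u: "u \<in> span S"
    have "tc u = 0" using u by (intro tceq) simp
    then show "\<phi>' u = \<phi> u" unfolding \<phi>'_def by simp
  next
    have "tc x = 1" by (intro tceq) (simp add: span_zero)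
    then show "\<phi>' x = Inf {norm (w + x) - \<phi> w | w. w \<in> span S}" unfolding \<phi>'_def c_def A_def
      by (simp add: l0)
  next
    fix y assume y: "y \<in> span (insert x S)"
    define t where "t = tc y"
    define u where "u = y - t *\<^sub>R x"
    have u: "u \<in> span S" unfolding u_def t_def using tc[OF y] .
    have yeq: "y = u + t *\<^sub>R x" unfolding u_def by simp
    have "\<phi> u + t * c \<le> norm (u + t *\<^sub>R x)"
    proof (cases "t > 0")
      case True
      have u1: "(1/t) *\<^sub>R u \<in> span S" using u span_scale by blast
      have "c \<le> norm ((1/t) *\<^sub>R u + x) - \<phi> ((1/t) *\<^sub>R u)" using clow[OF u1] .
      then have 1: "t * c \<le> t * norm ((1/t) *\<^sub>R u + x) - t * \<phi> ((1/t) *\<^sub>R u)"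
        using True mult_left_mono[of c "norm ((1/t) *\<^sub>R u + x) - \<phi> ((1/t) *\<^sub>R u)" t]
        by (simp only: right_diff_distrib)
      have "t *\<^sub>R ((1/t) *\<^sub>R u + x) = u + t *\<^sub>R x" using True by (simp add: algebra_simps)
      then have 2: "t * norm ((1/t) *\<^sub>R u + x) = norm (u + t *\<^sub>R x)"
        using True norm_scaleR[of t "(1/t) *\<^sub>R u + x"] by simp
      have 3: "t * \<phi> ((1/t) *\<^sub>R u) = \<phi> u" using True lsc[OF u] by simp
      show ?thesis using 1 2 3 by linarith
    next
      case False
      show ?thesis
      proof (cases "t = 0")
        case True then show ?thesis using bd u by simp
      next
        case t0: False
        define s where "s = - t"
        have s: "s > 0" using False t0 unfolding s_def by simp
        have u1: "(1/s) *\<^sub>R u \<in> span S" using u span_scale by blast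
        have "\<phi> ((1/s) *\<^sub>R u) - norm ((1/s) *\<^sub>R u - x) \<le> c" using cup[OF u1] .
        then have 1: "s * \<phi> ((1/s) *\<^sub>R u) - s * norm ((1/s) *\<^sub>R u - x) \<le> s * c"
          using s mult_left_mono[of "\<phi> ((1/s) *\<^sub>R u) - norm ((1/s) *\<^sub>R u - x)" c s]
          by (simp only: right_diff_distrib)
        have "s *\<^sub>R ((1/s) *\<^sub>R u - x) = u + t *\<^sub>R x" using s unfolding s_def by (simp add: algebra_simps)
        then have 2: "s * norm ((1/s) *\<^sub>R u - x) = norm (u + t *\<^sub>R x)"
          using s norm_scaleR[of s "(1/s) *\<^sub>R u - x"] by simp
        have 3: "s * \<phi> ((1/s) *\<^sub>R u) = \<phi> u" using s lsc[OF u] by simp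
        show ?thesis using 1 2 3 unfolding s_def by linarith
      qed
    qed
    moreover have "\<phi>' y = \<phi> u + t * c" unfolding \<phi>'_def u_def t_def by simp
    moreover have "norm y = norm (u + t *\<^sub>R x)" using yeq by simp
    ultimately show "\<phi>' y \<le> norm y" by linarith
  qed
qed

lemma hb_fin:
  fixes v :: "'b::real_normed_vector"
  assumes "finite X"
  shows "\<exists>\<phi>. lin_on (span (insert v X)) \<phi> \<and> (\<forall>u\<in>span (insert v X). \<phi> u \<le> norm u) \<and> \<phi> v = norm v"
  using assms
proof (induction X rule: finite_induct)
  case empty
  show ?case
  proof (cases "v = 0")
    case True
    show ?thesis by (rule exI[of _ "\<lambda>_. 0"]) (simp add: lin_on_def True)
  next
    case False
    have l: "lin_on (span {}) (\<lambda>_::'b. 0::real)" by (simp add: lin_on_def)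
    have b: "\<forall>u\<in>span {}. (\<lambda>_::'b. 0::real) u \<le> norm u" by simp
    obtain \<phi>' where p: "lin_on (span {v}) \<phi>'" "\<forall>u\<in>span {v}. \<phi>' u \<le> norm u"
      "v \<notin> span {} \<longrightarrow> \<phi>' v = Inf {norm (w + v) - (\<lambda>_. 0) w | w. w \<in> span {}}"
      using hb_step[OF l b, of v] by blast
    have "{norm (w + v) - (\<lambda>_. 0::real) w | w. w \<in> span {}} = {norm v}" by auto
    then have "\<phi>' v = norm v" using p(3) False by simp
    then show ?thesis using p by blast
  qed
next
  case (insert x F)
  then obtain \<phi> where p: "lin_on (span (insert v F)) \<phi>" "\<forall>u\<in>span (insert v F). \<phi> u \<le> norm u" "\<phi> v = norm v"
    by blast
  obtain \<phi>' where q: "lin_on (span (insert x (insert v F))) \<phi>'" "\<forall>u\<in>span (insert x (insert v F)). \<phi>' u \<le> norm u"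
    "\<forall>u\<in>span (insert v F). \<phi>' u = \<phi> u"
    using hb_step[OF p(1) p(2), of x] by blast
  have "\<phi>' v = norm v" using q(3) p(3) span_base[of v "insert v F"] by simp
  moreover have "insert x (insert v F) = insert v (insert x F)" by blast
  ultimately show ?case using q by metis
qed

lemma lin_on_sum:
  fixes n :: nat
  assumes "lin_on (span V) \<phi>" "\<forall>i<n. u i \<in> span V"
  shows "\<phi> (\<Sum>i<n. c i *\<^sub>R u i) = (\<Sum>i<n. c i * \<phi> (u i))"
  using assms(2)
proof (induction n)
  case 0
  have "\<phi> (0 *\<^sub>R 0) = 0 * \<phi> 0" using assms(1) span_zero unfolding lin_on_def by blast
  then show ?case by simp
next
  case (Suc n)
  have s: "(\<Sum>i<n. c i *\<^sub>R u i) \<in> span V" using Suc.prems by (intro span_sum span_scale) auto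
  have un: "u n \<in> span V" using Suc.prems by simp
  have "\<phi> (\<Sum>i<Suc n. c i *\<^sub>R u i) = \<phi> (\<Sum>i<n. c i *\<^sub>R u i) + \<phi> (c n *\<^sub>R u n)"
    using assms(1) s span_scale[OF un] unfolding lin_on_def by simp
  also have "\<phi> (c n *\<^sub>R u n) = c n * \<phi> (u n)" using assms(1) un unfolding lin_on_def by blast
  finally show ?case using Suc by simp
qed

lemma lin_on_diff:
  assumes "lin_on (span V) \<phi>" "u \<in> span V" "w \<in> span V"
  shows "\<phi> (u - w) = \<phi> u - \<phi> w"
proof -
  have "\<phi> (u + (-1) *\<^sub>R w) = \<phi> u + \<phi> ((-1) *\<^sub>R w)" using assms span_scale unfolding lin_on_def by blast
  also have "\<phi> ((-1) *\<^sub>R w) = (-1) * \<phi> w" using assms unfolding lin_on_def by blast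
  finally show ?thesis by simp
qed



lemma lip_bound:
  assumes "f \<in> lip0 z"
  shows "norm (f p - f q) \<le> lipnorm f * dist p q"
proof (cases "p = q")
  case True then show ?thesis by simp
next
  case False
  obtain L where L: "\<forall>p q. norm (f p - f q) \<le> L * dist p q" using assms unfolding lip0_def by blast
  have bdd: "bdd_above {norm (f p - f q) / dist p q | p q. p \<noteq> q}"
  proof (rule bdd_aboveI)
    fix r assume "r \<in> {norm (f p - f q) / dist p q | p q. p \<noteq> q}"
    then obtain a b where "a \<noteq> b" "r = norm (f a - f b) / dist a b" by blast
    then show "r \<le> L" using L[rule_format, of a b] by (simp add: divide_le_eq)
  qed
  have "norm (f p - f q) / dist p q \<le> lipnorm f"
    unfolding lipnorm_def using False by (intro cSup_upper[OF _ bdd]) blast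
  then show ?thesis using False by (simp add: divide_le_eq)
qed

lemma lipnorm_nonneg:
  fixes f :: "'a::metric_space \<Rightarrow> 'b::real_normed_vector" and p0 q0 :: 'a
  assumes "f \<in> lip0 z" "p0 \<noteq> q0"
  shows "0 \<le> lipnorm f"
proof -
  have "norm (f p0 - f q0) \<le> lipnorm f * dist p0 q0" using lip_bound[OF assms(1)] .
  moreover have "dist p0 q0 > 0" using assms(2) by simp
  ultimately have "0 \<le> lipnorm f * dist p0 q0" "dist p0 q0 > 0" using norm_ge_zero order_trans by blast+
  then show ?thesis by (simp add: zero_le_mult_iff)
qed

lemma lipnorm_le:
  fixes f :: "'a::metric_space \<Rightarrow> 'b::real_normed_vector" and p0 q0 :: 'a
  assumes "p0 \<noteq> q0" "\<forall>p q. norm (f p - f q) \<le> K * dist p q"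
  shows "lipnorm f \<le> K"
  unfolding lipnorm_def
proof (rule cSup_least)
  show "{norm (f p - f q) / dist p q | p q. p \<noteq> q} \<noteq> {}" using assms(1) by blast
next
  fix r assume "r \<in> {norm (f p - f q) / dist p q | p q. p \<noteq> q}"
  then obtain a b where "a \<noteq> b" "r = norm (f a - f b) / dist a b" by blast
  then show "r \<le> K" using assms(2)[rule_format, of a b] by (simp add: divide_le_eq)
qed

lemma zero_lip0: "(\<lambda>_. 0) \<in> lip0 z"
  unfolding lip0_def by (auto intro: exI[of _ 0])

lemma lipnorm_zero: fixes p0 q0 :: "'a::metric_space" shows "p0 \<noteq> q0 \<Longrightarrow> lipnorm (\<lambda>_::'a::metric_space. 0::'b::real_normed_vector) \<le> 0"
  by (rule lipnorm_le) auto

lemma lip0_comb: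
  fixes g h :: "'a::metric_space \<Rightarrow> real"
  assumes "g \<in> lip0 z" "h \<in> lip0 z"
  shows "(\<lambda>x. a * g x + b * h x) \<in> lip0 z"
proof -
  obtain L1 where L1: "\<forall>p q. norm (g p - g q) \<le> L1 * dist p q" using assms unfolding lip0_def by blast
  obtain L2 where L2: "\<forall>p q. norm (h p - h q) \<le> L2 * dist p q" using assms unfolding lip0_def by blast
  have "norm ((a * g p + b * h p) - (a * g q + b * h q)) \<le> (\<bar>a\<bar> * L1 + \<bar>b\<bar> * L2) * dist p q" for p q
  proof -
    have "norm ((a * g p + b * h p) - (a * g q + b * h q)) = \<bar>a * (g p - g q) + b * (h p - h q)\<bar>"
      by (simp add: algebra_simps)
    also have "\<dots> \<le> \<bar>a\<bar> * \<bar>g p - g q\<bar> + \<bar>b\<bar> * \<bar>h p - h q\<bar>"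
      by (metis abs_mult abs_triangle_ineq)
    also have "\<dots> \<le> \<bar>a\<bar> * (L1 * dist p q) + \<bar>b\<bar> * (L2 * dist p q)"
      using L1[rule_format, of p q] L2[rule_format, of p q]
      by (intro add_mono mult_left_mono) auto
    finally show ?thesis by (simp add: algebra_simps)
  qed
  then show ?thesis using assms unfolding lip0_def by auto
qed

definition comb :: "'a::metric_space \<Rightarrow> nat \<Rightarrow> (nat \<Rightarrow> real) \<Rightarrow> (nat \<Rightarrow> 'a) \<Rightarrow> ('a \<Rightarrow> real) \<Rightarrow> real" where
  "comb z n c x = (\<lambda>g. \<Sum>i<n. c i * delta z (x i) g)"

lemma comb_eval: "g \<in> lip0 z \<Longrightarrow> comb z n c x g = (\<Sum>i<n. c i * g (x i))"
  by (simp add: comb_def delta_def)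

lemma comb_lipdual: "comb (z::'a::metric_space) n c x \<in> lipdual z"
  unfolding lipdual_def
proof (intro CollectI conjI allI impI)
  fix g :: "'a \<Rightarrow> real" assume "g \<notin> lip0 z" then show "comb z n c x g = 0" by (simp add: comb_def delta_def)
next
  fix g h :: "'a \<Rightarrow> real" and a b :: real assume g: "g \<in> lip0 z" and h: "h \<in> lip0 z"
  show "comb z n c x (\<lambda>x. a * g x + b * h x) = a * comb z n c x g + b * comb z n c x h"
    using g h lip0_comb[OF g h, of a b]
    by (simp add: comb_eval sum.distrib sum_distrib_left algebra_simps)
next
  show "\<exists>C. \<forall>g\<in>lip0 z. \<bar>comb z n c x g\<bar> \<le> C * lipnorm g"
  proof (intro exI ballI)
    fix g :: "'a \<Rightarrow> real" assume g: "g \<in> lip0 z"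
    have "\<bar>comb z n c x g\<bar> = \<bar>\<Sum>i<n. c i * g (x i)\<bar>" using g by (simp add: comb_eval)
    also have "\<dots> \<le> (\<Sum>i<n. \<bar>c i * g (x i)\<bar>)" by (rule sum_abs)
    also have "\<dots> \<le> (\<Sum>i<n. \<bar>c i\<bar> * dist (x i) z * lipnorm g)"
    proof (rule sum_mono)
      fix i
      have "\<bar>g (x i) - g z\<bar> \<le> lipnorm g * dist (x i) z" using lip_bound[OF g] by simp
      moreover have "g z = 0" using g unfolding lip0_def by simp
      ultimately have "\<bar>g (x i)\<bar> \<le> lipnorm g * dist (x i) z" by simp
      then have "\<bar>c i\<bar> * \<bar>g (x i)\<bar> \<le> \<bar>c i\<bar> * (lipnorm g * dist (x i) z)"
        by (intro mult_left_mono) auto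
      then show "\<bar>c i * g (x i)\<bar> \<le> \<bar>c i\<bar> * dist (x i) z * lipnorm g"
        by (simp add: abs_mult algebra_simps)
    qed
    also have "\<dots> = (\<Sum>i<n. \<bar>c i\<bar> * dist (x i) z) * lipnorm g" by (simp add: sum_distrib_right)
    finally show "\<bar>comb z n c x g\<bar> \<le> (\<Sum>i<n. \<bar>c i\<bar> * dist (x i) z) * lipnorm g" .
  qed
qed

lemma dnorm_zero:
  assumes "p0 \<noteq> (q0::'a::metric_space)"
  shows "dnorm z (\<lambda>g::'a \<Rightarrow> real. 0) = 0"
proof -
  have a: "(\<lambda>_::'a. 0::real) \<in> lip0 z" by (rule zero_lip0)
  have b: "lipnorm (\<lambda>_::'a. 0::real) \<le> 1" using lipnorm_zero[OF assms] by (rule order_trans) simp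
  have "{\<bar>(\<lambda>g::'a \<Rightarrow> real. 0::real) g\<bar> | g. g \<in> lip0 z \<and> lipnorm g \<le> 1} = {0}"
    using a b by (auto intro!: exI[of _ "\<lambda>_::'a. 0::real"])
  then show ?thesis unfolding dnorm_def by simp
qed

lemma comb_free:
  fixes z :: "'a::metric_space"
  assumes "p0 \<noteq> (q0::'a::metric_space)"
  shows "comb z n c x \<in> free z"
  unfolding free_def
proof (intro CollectI conjI allI impI comb_lipdual)
  fix e :: real assume "e > 0"
  then show "\<exists>(n'::nat) c' x'. dnorm z (\<lambda>g. comb z n c x g - (\<Sum>i<n'. c' i * delta z (x' i) g)) < e"
  proof (intro exI)
    have "(\<lambda>g. comb z n c x g - (\<Sum>i<n. c i * delta z (x i) g)) = (\<lambda>g. 0)" by (simp add: comb_def)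
    then show "dnorm z (\<lambda>g. comb z n c x g - (\<Sum>i<n. c i * delta z (x i) g)) < e"
      using dnorm_zero[OF assms, of z] \<open>e > 0\<close> by simp
  qed
qed

lemma delta_comb: "delta z y = comb z 1 (\<lambda>_. 1) (\<lambda>_. y)"
  by (simp add: comb_def)

lemma dnorm_upper:
  fixes g :: "'a::metric_space \<Rightarrow> real" and p0 q0 :: 'a
  assumes "\<phi> \<in> lipdual z" "p0 \<noteq> q0" "g \<in> lip0 z" "lipnorm g \<le> 1"
  shows "\<bar>\<phi> g\<bar> \<le> dnorm z \<phi>"
proof -
  obtain C where C: "\<forall>g\<in>lip0 z. \<bar>\<phi> g\<bar> \<le> C * lipnorm g" using assms(1) unfolding lipdual_def by blast
  have "bdd_above {\<bar>\<phi> g\<bar> | g. g \<in> lip0 z \<and> lipnorm g \<le> 1}"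
  proof (rule bdd_aboveI)
    fix r assume "r \<in> {\<bar>\<phi> g\<bar> | g. g \<in> lip0 z \<and> lipnorm g \<le> 1}"
    then obtain h where h: "h \<in> lip0 z" "lipnorm h \<le> 1" "r = \<bar>\<phi> h\<bar>" by blast
    have "0 \<le> lipnorm h" using lipnorm_nonneg[OF h(1) assms(2)] .
    have "C * lipnorm h \<le> \<bar>C\<bar> * lipnorm h" using \<open>0 \<le> lipnorm h\<close> by (intro mult_right_mono) auto
    also have "\<dots> \<le> \<bar>C\<bar>" using h(2) by (intro mult_left_le) auto
    finally have "C * lipnorm h \<le> \<bar>C\<bar>" .
    then show "r \<le> \<bar>C\<bar>" using C h by force
  qed
  then show ?thesis unfolding dnorm_def using assms(3,4) by (intro cSup_upper) auto
qed

lemma dnorm_nonneg: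
  fixes p0 q0 z :: "'a::metric_space"
  assumes "\<phi> \<in> lipdual z" "p0 \<noteq> q0"
  shows "0 \<le> dnorm z \<phi>"
proof -
  have a: "(\<lambda>_::'a. 0::real) \<in> lip0 z" by (rule zero_lip0)
  have b: "lipnorm (\<lambda>_::'a. 0::real) \<le> 1" using lipnorm_zero[OF assms(2)] by (rule order_trans) simp
  show ?thesis using dnorm_upper[OF assms a b] by simp
qed

lemma lipdual_comb:
  fixes \<phi> \<psi> :: "('a::metric_space \<Rightarrow> real) \<Rightarrow> real"
  assumes "\<phi> \<in> lipdual z" "\<psi> \<in> lipdual z"
  shows "(\<lambda>g. a * \<phi> g + b * \<psi> g) \<in> lipdual z"
proof -
  obtain C1 where C1: "\<forall>g\<in>lip0 z. \<bar>\<phi> g\<bar> \<le> C1 * lipnorm g" using assms(1) unfolding lipdual_def by blast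
  obtain C2 where C2: "\<forall>g\<in>lip0 z. \<bar>\<psi> g\<bar> \<le> C2 * lipnorm g" using assms(2) unfolding lipdual_def by blast
  have b: "\<bar>a * \<phi> g + b * \<psi> g\<bar> \<le> (\<bar>a\<bar> * C1 + \<bar>b\<bar> * C2) * lipnorm g" if g: "g \<in> lip0 z" for g :: "'a \<Rightarrow> real"
  proof -
    have "\<bar>a * \<phi> g + b * \<psi> g\<bar> \<le> \<bar>a\<bar> * \<bar>\<phi> g\<bar> + \<bar>b\<bar> * \<bar>\<psi> g\<bar>" by (metis abs_mult abs_triangle_ineq)
    also have "\<dots> \<le> \<bar>a\<bar> * (C1 * lipnorm g) + \<bar>b\<bar> * (C2 * lipnorm g)"
      using C1 C2 g by (intro add_mono mult_left_mono) auto
    finally show ?thesis by (simp add: algebra_simps)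
  qed
  have z1: "\<forall>g. g \<notin> lip0 z \<longrightarrow> \<phi> g = 0" and l1: "\<forall>g h a b. g \<in> lip0 z \<longrightarrow> h \<in> lip0 z \<longrightarrow>
        \<phi> (\<lambda>x. a * g x + b * h x) = a * \<phi> g + b * \<phi> h" using assms(1) unfolding lipdual_def by blast+
  have z2: "\<forall>g. g \<notin> lip0 z \<longrightarrow> \<psi> g = 0" and l2: "\<forall>g h a b. g \<in> lip0 z \<longrightarrow> h \<in> lip0 z \<longrightarrow>
        \<psi> (\<lambda>x. a * g x + b * h x) = a * \<psi> g + b * \<psi> h" using assms(2) unfolding lipdual_def by blast+
  show ?thesis unfolding lipdual_def
  proof (intro CollectI conjI allI impI)
    fix g :: "'a \<Rightarrow> real" assume "g \<notin> lip0 z" then show "a * \<phi> g + b * \<psi> g = 0" using z1 z2 by simp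
  next
    fix g h :: "'a \<Rightarrow> real" and a' b' :: real assume "g \<in> lip0 z" "h \<in> lip0 z"
    then show "a * \<phi> (\<lambda>x. a' * g x + b' * h x) + b * \<psi> (\<lambda>x. a' * g x + b' * h x) =
       a' * (a * \<phi> g + b * \<psi> g) + b' * (a * \<phi> h + b * \<psi> h)"
      using l1 l2 by (simp add: algebra_simps)
  next
    show "\<exists>C. \<forall>g\<in>lip0 z. \<bar>a * \<phi> g + b * \<psi> g\<bar> \<le> C * lipnorm g" using b by blast
  qed
qed



lemma sum_split_nat: "(\<Sum>i<m+n. F i) = (\<Sum>i<m. F i) + (\<Sum>i<n. F (m+i :: nat))"
  for F :: "nat \<Rightarrow> 'x::comm_monoid_add"
  by (induction n) (auto simp: add.assoc)

lemma free_diff: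
  fixes z p0 q0 :: "'a::metric_space"
  assumes phi: "\<phi> \<in> free z" and pq: "p0 \<noteq> q0"
  shows "(\<lambda>g. \<phi> g - comb z n c x g) \<in> free z"
proof -
  have pd: "\<phi> \<in> lipdual z" using phi unfolding free_def by blast
  have "(\<lambda>g. 1 * \<phi> g + (-1) * comb z n c x g) \<in> lipdual z"
    by (rule lipdual_comb[OF pd comb_lipdual])
  then have ld: "(\<lambda>g. \<phi> g - comb z n c x g) \<in> lipdual z" by simp
  show ?thesis unfolding free_def
  proof (intro CollectI conjI allI impI ld)
    fix e :: real assume "e > 0"
    then obtain n' :: nat and c' x' where dn: "dnorm z (\<lambda>g. \<phi> g - (\<Sum>i<n'. c' i * delta z (x' i) g)) < e"
      using phi unfolding free_def by blast
    define C where "C i = (if i < n' then c' i else - c (i - n'))" for i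
    define X where "X i = (if i < n' then x' i else x (i - n'))" for i
    have eq: "(\<Sum>i<n'+n. C i * delta z (X i) g) = (\<Sum>i<n'. c' i * delta z (x' i) g) - comb z n c x g" for g
    proof -
      have "(\<Sum>i<n'+n. C i * delta z (X i) g) = (\<Sum>i<n'. C i * delta z (X i) g) + (\<Sum>i<n. C (n'+i) * delta z (X (n'+i)) g)"
        by (rule sum_split_nat)
      also have "(\<Sum>i<n'. C i * delta z (X i) g) = (\<Sum>i<n'. c' i * delta z (x' i) g)"
        by (rule sum.cong) (auto simp: C_def X_def)
      also have "(\<Sum>i<n. C (n'+i) * delta z (X (n'+i)) g) = - comb z n c x g"
        by (simp add: C_def X_def comb_def sum_negf)
      finally show ?thesis by simp
    qed
    have "(\<lambda>g. (\<phi> g - comb z n c x g) - (\<Sum>i<n'+n. C i * delta z (X i) g)) = (\<lambda>g. \<phi> g - (\<Sum>i<n'. c' i * delta z (x' i) g))"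
      using eq by (simp add: algebra_simps)
    then have "dnorm z (\<lambda>g. (\<phi> g - comb z n c x g) - (\<Sum>i<n'+n. C i * delta z (X i) g)) < e" using dn by simp
    then show "\<exists>(n''::nat) c'' x''. dnorm z (\<lambda>g. (\<phi> g - comb z n c x g) - (\<Sum>i<n''. c'' i * delta z (x'' i) g)) < e"
      by blast
  qed
qed

lemma T_comb:
  fixes z p0 q0 :: "'a::metric_space" and f :: "'a \<Rightarrow> 'b::real_normed_vector"
  assumes T: "assoc_op z f T" and pq: "p0 \<noteq> q0"
  shows "T (comb z n c x) = (\<Sum>i<n. c i *\<^sub>R f (x i))"
proof -
  have Tlin: "\<And>\<phi> \<psi> a b. \<phi> \<in> free z \<Longrightarrow> \<psi> \<in> free z \<Longrightarrow> T (\<lambda>g. a * \<phi> g + b * \<psi> g) = a *\<^sub>R T \<phi> + b *\<^sub>R T \<psi>"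
    using T unfolding assoc_op_def by blast
  have Td: "T (delta z y) = f y" for y using T unfolding assoc_op_def by blast
  have df: "delta z y \<in> free z" for y unfolding delta_comb by (rule comb_free[OF pq])
  show ?thesis
  proof (induction n)
    case 0
    have "T (\<lambda>g. 0 * delta z z g + 0 * delta z z g) = 0 *\<^sub>R T (delta z z) + 0 *\<^sub>R T (delta z z)"
      using Tlin df by blast
    moreover have "comb z 0 c x = (\<lambda>g. 0 * delta z z g + 0 * delta z z g)" by (simp add: comb_def)
    ultimately show ?case by simp
  next
    case (Suc n)
    have "comb z (Suc n) c x = (\<lambda>g. 1 * comb z n c x g + c n * delta z (x n) g)" by (simp add: comb_def)
    moreover have "T (\<lambda>g. 1 * comb z n c x g + c n * delta z (x n) g) = 1 *\<^sub>R T (comb z n c x) + c n *\<^sub>R T (delta z (x n))"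
      using Tlin comb_free[OF pq] df by blast
    ultimately show ?case using Suc Td by simp
  qed
qed

lemma mcshane:
  fixes h :: "'a::metric_space \<Rightarrow> real"
  assumes fin: "finite A" and ne: "A \<noteq> {}" and K: "K \<ge> 0" and hl: "\<forall>a\<in>A. \<forall>b\<in>A. h a - h b \<le> K * dist a b"
  shows "\<exists>G. (\<forall>a\<in>A. G a = h a) \<and> (\<forall>p q. G p - G q \<le> K * dist p q)"
proof -
  define G where "G y = Min ((\<lambda>a. h a + K * dist y a) ` A)" for y
  have f1: "finite ((\<lambda>a. h a + K * dist y a) ` A)" for y using fin by simp
  have f2: "(\<lambda>a. h a + K * dist y a) ` A \<noteq> {}" for y using ne by simp
  have Gle: "G y \<le> h a + K * dist y a" if "a \<in> A" for y a
    unfolding G_def using f1 that by (intro Min_le) auto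
  have Gin: "\<exists>b\<in>A. G y = h b + K * dist y b" for y
    using Min_in[OF f1 f2, of y] unfolding G_def by auto
  show ?thesis
  proof (intro exI conjI ballI allI)
    fix a assume a: "a \<in> A"
    obtain b where b: "b \<in> A" "G a = h b + K * dist a b" using Gin by blast
    have "h a \<le> G a" using hl a b by force
    moreover have "G a \<le> h a" using Gle[OF a, of a] by simp
    ultimately show "G a = h a" by simp
  next
    fix p q
    obtain b where b: "b \<in> A" "G q = h b + K * dist q b" using Gin by blast
    have "G p \<le> h b + K * dist p b" using Gle[OF b(1)] .
    also have "K * dist p b \<le> K * (dist p q + dist q b)" using K dist_triangle by (intro mult_left_mono) auto
    finally show "G p - G q \<le> K * dist p q" using b by (simp add: algebra_simps)
  qed
qed



lemma norm_T_le:
  fixes z p0 q0 :: "'a::metric_space" and f :: "'a \<Rightarrow> 'b::real_normed_vector"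
  assumes f: "f \<in> lip0 z" and T: "assoc_op z f T" and pq: "p0 \<noteq> q0"
    and phi: "\<phi> \<in> free z" and phi1: "dnorm z \<phi> \<le> 1"
  shows "norm (T \<phi>) \<le> lipnorm f"
proof -
  define L where "L = lipnorm f"
  have L0: "0 \<le> L" using lipnorm_nonneg[OF f pq] L_def by simp
  obtain C where C: "\<forall>\<phi>\<in>free z. norm (T \<phi>) \<le> C * dnorm z \<phi>" using T unfolding assoc_op_def by blast
  have Tlin: "\<And>\<phi> \<psi> a b. \<phi> \<in> free z \<Longrightarrow> \<psi> \<in> free z \<Longrightarrow> T (\<lambda>g. a * \<phi> g + b * \<psi> g) = a *\<^sub>R T \<phi> + b *\<^sub>R T \<psi>"
    using T unfolding assoc_op_def by blast
  define C' where "C' = max C 0"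
  have C'0: "C' \<ge> 0" by (simp add: C'_def)
  have pd: "\<phi> \<in> lipdual z" using phi unfolding free_def by blast
  show ?thesis unfolding L_def[symmetric]
  proof (rule field_le_epsilon)
    fix \<epsilon> :: real assume eps: "0 < \<epsilon>"
    define D where "D = L + 2 + C'"
    have D0: "D > 0" using L0 C'0 by (simp add: D_def)
    define e where "e = min 1 (\<epsilon> / D)"
    have e0: "0 < e" using eps D0 by (simp add: e_def)
    have e1: "e \<le> 1" by (simp add: e_def)
    have "e \<le> \<epsilon> / D" by (simp add: e_def)
    then have e2: "e * D \<le> \<epsilon>" using D0 by (simp add: pos_le_divide_eq)
    obtain n :: nat and c x where dn: "dnorm z (\<lambda>g. \<phi> g - (\<Sum>i<n. c i * delta z (x i) g)) < e"
      using phi e0 unfolding free_def by blast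
    define \<psi> where "\<psi> = comb z n c x"
    define \<kappa> where "\<kappa> = (\<lambda>g. \<phi> g - \<psi> g)"
    have psif: "\<psi> \<in> free z" unfolding \<psi>_def by (rule comb_free[OF pq])
    have chif: "\<kappa> \<in> free z" unfolding \<kappa>_def \<psi>_def by (rule free_diff[OF phi pq])
    have chid: "\<kappa> \<in> lipdual z" using chif unfolding free_def by blast
    have dnchi: "dnorm z \<kappa> < e" using dn unfolding \<kappa>_def \<psi>_def comb_def .
    have "T (\<lambda>g. 1 * \<phi> g + (-1) * \<psi> g) = 1 *\<^sub>R T \<phi> + (-1) *\<^sub>R T \<psi>" using Tlin phi psif by blast
    moreover have "(\<lambda>g. 1 * \<phi> g + (-1) * \<psi> g) = \<kappa>" unfolding \<kappa>_def by simp
    ultimately have Tchi: "T \<kappa> = T \<phi> - T \<psi>" by simp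
    have "norm (T \<kappa>) \<le> C * dnorm z \<kappa>" using C chif by blast
    also have "\<dots> \<le> C' * dnorm z \<kappa>" using dnorm_nonneg[OF chid pq] by (intro mult_right_mono) (auto simp: C'_def)
    also have "\<dots> \<le> C' * e" using dnchi C'0 by (intro mult_left_mono) auto
    finally have nTchi: "norm (T \<kappa>) \<le> C' * e" .
    define v where "v = T \<psi>"
    have v: "v = (\<Sum>i<n. c i *\<^sub>R f (x i))" unfolding v_def \<psi>_def by (rule T_comb[OF T pq])
    define K where "K = L + e"
    have K0: "K > 0" using L0 e0 by (simp add: K_def)
    define X where "X = f ` x ` {..<n}"
    obtain \<phi>s where hb: "lin_on (span (insert v X)) \<phi>s" "\<forall>u\<in>span (insert v X). \<phi>s u \<le> norm u" "\<phi>s v = norm v"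
      using hb_fin[of X v] unfolding X_def by blast
    define V where "V = insert v X"
    have hb1: "lin_on (span V) \<phi>s" using hb(1) unfolding V_def .
    have hb2: "\<forall>u\<in>span V. \<phi>s u \<le> norm u" using hb(2) unfolding V_def .
    define Xp where "Xp = insert z (x ` {..<n})"
    have fz: "f z = 0" using f unfolding lip0_def by simp
    have fspan: "f a \<in> span V" if "a \<in> Xp" for a
    proof (cases "a = z")
      case True then show ?thesis using fz span_zero by simp
    next
      case False
      then have "f a \<in> V" using that unfolding Xp_def V_def X_def by auto
      then show ?thesis by (rule span_base)
    qed
    define h where "h a = \<phi>s (f a)" for a
    have hlip: "\<forall>a\<in>Xp. \<forall>b\<in>Xp. h a - h b \<le> K * dist a b"
    proof (intro ballI)
      fix a b assume a: "a \<in> Xp" and b: "b \<in> Xp"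
      have "h a - h b = \<phi>s (f a - f b)" unfolding h_def using lin_on_diff[OF hb1 fspan[OF a] fspan[OF b]] by simp
      also have "\<dots> \<le> norm (f a - f b)" using hb2 span_diff[OF fspan[OF a] fspan[OF b]] by blast
      also have "\<dots> \<le> L * dist a b" using lip_bound[OF f] L_def by simp
      also have "\<dots> \<le> K * dist a b" using e0 by (intro mult_right_mono) (auto simp: K_def)
      finally show "h a - h b \<le> K * dist a b" .
    qed
    obtain G where G: "\<forall>a\<in>Xp. G a = h a" "\<forall>p q. G p - G q \<le> K * dist p q"
      using mcshane[of Xp K h] hlip K0 unfolding Xp_def by auto
    define g where "g y = G y / K" for y
    have phs0: "\<phi>s 0 = 0" using hb1 span_zero[of V] unfolding lin_on_def
      by (metis mult_zero_left scaleR_zero_left)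
    have hz: "h z = 0" unfolding h_def using fz phs0 by simp
    have gz: "g z = 0" unfolding g_def using G(1) hz by (simp add: Xp_def)
    have gl: "\<forall>p q. norm (g p - g q) \<le> 1 * dist p q"
    proof (intro allI)
      fix p q
      have "G p - G q \<le> K * dist p q" "G q - G p \<le> K * dist p q" using G(2) dist_commute by metis+
      then have "\<bar>G p - G q\<bar> \<le> K * dist p q" by linarith
      then have "\<bar>G p - G q\<bar> / K \<le> dist p q" using K0 by (simp add: pos_divide_le_eq mult.commute)
      moreover have "g p - g q = (G p - G q) / K" unfolding g_def by (simp add: diff_divide_distrib)
      ultimately show "norm (g p - g q) \<le> 1 * dist p q" using K0 by (simp add: abs_of_pos)
    qed
    have g0: "g \<in> lip0 z" unfolding lip0_def using gz gl by blast
    have gn: "lipnorm g \<le> 1" by (rule lipnorm_le[OF pq gl])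
    have a1: "\<bar>\<phi> g\<bar> \<le> 1" using dnorm_upper[OF pd pq g0 gn] phi1 by linarith
    have a2: "\<bar>\<kappa> g\<bar> < e" using dnorm_upper[OF chid pq g0 gn] dnchi by linarith
    have xin: "\<forall>i<n. f (x i) \<in> span V" using fspan unfolding Xp_def by auto
    have "\<psi> g = (\<Sum>i<n. c i * g (x i))" unfolding \<psi>_def by (rule comb_eval[OF g0])
    also have "\<dots> = (\<Sum>i<n. c i * \<phi>s (f (x i))) / K"
      unfolding g_def h_def using G(1) by (simp add: Xp_def h_def sum_divide_distrib)
    also have "(\<Sum>i<n. c i * \<phi>s (f (x i))) = \<phi>s v" unfolding v using lin_on_sum[OF hb1 xin] by simp
    finally have psig: "\<psi> g = norm v / K" using hb(3) by simp
    have "\<kappa> g = \<phi> g - \<psi> g" by (simp add: \<kappa>_def)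
    then have "norm v / K \<le> 1 + e" using a1 a2 psig by linarith
    then have nv: "norm v \<le> (1 + e) * K" using K0 by (simp add: pos_divide_le_eq)
    have "T \<phi> = T \<kappa> + v" using Tchi v_def by simp
    then have "norm (T \<phi>) \<le> norm (T \<kappa>) + norm v" by (simp add: norm_triangle_ineq)
    also have "\<dots> \<le> C' * e + (1 + e) * K" using nTchi nv by linarith
    finally have 1: "norm (T \<phi>) \<le> C' * e + (1 + e) * K" .
    have ee: "e * e \<le> e" using e0 e1 by (simp add: mult_left_le)
    have 2: "C' * e + (1 + e) * K = L + (L * e + e + e * e + C' * e)" by (simp add: K_def algebra_simps)
    have 3: "e * D = L * e + 2 * e + C' * e" by (simp add: D_def algebra_simps)
    show "norm (T \<phi>) \<le> L + \<epsilon>" using 1 2 3 ee e2 by linarith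
  qed
qed



theorem lemma2p1:
  fixes z :: "'a::complete_space"
    and f :: "'a \<Rightarrow> 'b::banach"
    and T :: "(('a \<Rightarrow> real) \<Rightarrow> real) \<Rightarrow> 'b"
  assumes "f \<in> lip0 z"
    and "f \<in> attainsA z"
    and "assoc_op z f T"
  shows "qna_free z T"
proof -
  note f = assms(1) and T = assms(3)
  obtain y p q where pq: "\<forall>n. p n \<noteq> q n"
    and lim: "(\<lambda>n. (1 / dist (p n) (q n)) *\<^sub>R (f (p n) - f (q n))) \<longlonglongrightarrow> y"
    and ny: "norm y = lipnorm f"
    using assms(2) unfolding attainsA_def attains_toward_def by blast
  have pq0: "p 0 \<noteq> q 0" using pq by blast
  define a where "a n = 1 / dist (p n) (q n)" for n
  define \<mu> where "\<mu> n = comb z 2 (\<lambda>i. if i = 0 then a n else - a n) (\<lambda>i. if i = 0 then p n else q n)" for n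
  have muf: "\<mu> n \<in> free z" for n unfolding \<mu>_def by (rule comb_free[OF pq0])
  have Tmu: "T (\<mu> n) = (1 / dist (p n) (q n)) *\<^sub>R (f (p n) - f (q n))" for n
    unfolding \<mu>_def T_comb[OF T pq0] by (simp add: numeral_2_eq_2 a_def scaleR_diff_right)
  have dmu: "dnorm z (\<mu> n) \<le> 1" for n
    unfolding dnorm_def
  proof (rule cSup_least)
    have "(\<lambda>_::'a. 0::real) \<in> lip0 z" by (rule zero_lip0)
    moreover have "lipnorm (\<lambda>_::'a. 0::real) \<le> 1" using lipnorm_zero[OF pq0] by (rule order_trans) simp
    ultimately show "{\<bar>\<mu> n g\<bar> |g. g \<in> lip0 z \<and> lipnorm g \<le> 1} \<noteq> {}" by blast
  next
    fix r assume "r \<in> {\<bar>\<mu> n g\<bar> |g. g \<in> lip0 z \<and> lipnorm g \<le> 1}"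
    then obtain g where g: "g \<in> lip0 z" "lipnorm g \<le> 1" "r = \<bar>\<mu> n g\<bar>" by blast
    have d: "dist (p n) (q n) > 0" using pq by simp
    have "\<mu> n g = (g (p n) - g (q n)) / dist (p n) (q n)"
      unfolding \<mu>_def comb_eval[OF g(1)] by (simp add: numeral_2_eq_2 a_def diff_divide_distrib)
    then have "r = \<bar>g (p n) - g (q n)\<bar> / dist (p n) (q n)" using g(3) d by simp
    also have "\<dots> \<le> lipnorm g" using lip_bound[OF g(1), of "p n" "q n"] d by (simp add: pos_divide_le_eq)
    finally show "r \<le> 1" using g(2) by linarith
  qed
  define S where "S = {norm (T \<phi>) | \<phi>. \<phi> \<in> free z \<and> dnorm z \<phi> \<le> 1}"
  have bdd: "bdd_above S" unfolding S_def using norm_T_le[OF f T pq0] by (intro bdd_aboveI) blast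
  have le1: "opnorm_free z T \<le> lipnorm f" unfolding opnorm_free_def S_def[symmetric]
  proof (rule cSup_least)
    show "S \<noteq> {}" unfolding S_def using muf dmu by blast
    fix r assume "r \<in> S" then show "r \<le> lipnorm f" unfolding S_def using norm_T_le[OF f T pq0] by blast
  qed
  have le2: "lipnorm f \<le> opnorm_free z T"
  proof -
    have "(\<lambda>n. norm (T (\<mu> n))) \<longlonglongrightarrow> norm y" unfolding Tmu by (rule tendsto_norm[OF lim])
    moreover have "\<forall>n\<ge>0. norm (T (\<mu> n)) \<le> opnorm_free z T" unfolding opnorm_free_def S_def[symmetric]
      using bdd muf dmu by (auto intro!: cSup_upper simp: S_def)
    ultimately show ?thesis using ny LIMSEQ_le_const2 by metis
  qed
  show ?thesis unfolding qna_free_def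
  proof (intro exI conjI allI)
    show "\<mu> n \<in> free z" for n by (rule muf)
    show "dnorm z (\<mu> n) \<le> 1" for n by (rule dmu)
    show "(\<lambda>n. T (\<mu> n)) \<longlonglongrightarrow> y" unfolding Tmu by (rule lim)
    show "norm y = opnorm_free z T" using le1 le2 ny by linarith
  qed
qed

end
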